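(* Let $f \in L^2(0,L)$ and $\beta \in \mathbb{R}$. Let $u_0 \in V$ satisfy $a_0(u_0,v) = \int_0^L f v\,dx - \beta v(L)$ for all $v \in V$, and for $n = 1,2,\dots,m$ let $u_n \in V$ satisfy $$a_0(u_n,v) + \sum_{j=1}^{n} a_j(u_{n-j}, v) = 0 \quad \text{for all } v \in V.$$ Then for every $m \ge 1$, $$a_0(u_m, v) = (-1)^m a_m(u_0, v) \quad \text{for all } v \in V.$$
   Context: Let $L>0$ and let $\kappa:(0,L)\to\mathbb{R}$ be measurable with $0<\kappa_{\min}\le \kappa(x)\le \kappa_{\max}$ for a.e. $x$; set $\psi = \log \kappa \in L^\infty(0,L)$. $V = \{ v \in H^1(0,L) : v(0) = 0\}$. For integers $j \ge 0$ and $u,v \in V$, define $a_j(u,v) = \frac{1}{j!}\int_0^L \psi(x)^j\, u'(x)\, v'(x)\,dx$. *)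

theory Defs
  imports "HOL-Analysis.Analysis"
begin

text \<open>g is a weak derivative (in L^2(0,L)) of v, with v(0)=0 built in:
  v is the (continuous) primitive v(x) = integral of g over [0,x] on [0,L].
  Such v are exactly the continuous representatives of elements of
  V = {v in H^1(0,L) : v(0) = 0}.\<close>
definition is_wderiv :: "real \<Rightarrow> (real \<Rightarrow> real) \<Rightarrow> (real \<Rightarrow> real) \<Rightarrow> bool" where
  "is_wderiv L v g \<longleftrightarrow>
     g \<in> borel_measurable lborel \<and>
     set_integrable lborel {0<..<L} (\<lambda>x. (g x)^2) \<and>
     (\<forall>x\<in>{0..L}. v x = (LBINT t=0..x. g t))"

definition inV :: "real \<Rightarrow> (real \<Rightarrow> real) \<Rightarrow> bool" where
  "inV L v \<longleftrightarrow> (\<exists>g. is_wderiv L v g)"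

definition wderiv :: "real \<Rightarrow> (real \<Rightarrow> real) \<Rightarrow> real \<Rightarrow> real" where
  "wderiv L v = (SOME g. is_wderiv L v g)"

definition a_form :: "real \<Rightarrow> (real \<Rightarrow> real) \<Rightarrow> nat \<Rightarrow> (real \<Rightarrow> real) \<Rightarrow> (real \<Rightarrow> real) \<Rightarrow> real" where
  "a_form L \<psi> j u v =
     (1 / fact j) * (LINT x:{0<..<L}|lborel. (\<psi> x)^j * wderiv L u x * wderiv L v x)"

end

theory Submission
  imports Defs
begin

lemma ennreal_eq_aux:
  fixes A B :: ennreal
  assumes "0 = enn2real A - enn2real B" "A < \<infinity>" "B < \<infinity>"
  shows "A = B"
proof -
  from assms(1) have e: "enn2real A = enn2real B" by simp
  have "A = ennreal (enn2real A)" using assms(2) by simp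
  also have "\<dots> = ennreal (enn2real B)" using e by simp
  also have "\<dots> = B" using assms(3) by simp
  finally show ?thesis .
qed

lemma ae_zero_if_Iio:
  fixes d :: "real \<Rightarrow> real"
  assumes int: "integrable lborel d"
    and z: "\<And>a. (LINT x|lborel. indicator {..<a} x * d x) = 0"
  shows "AE x in lborel. d x = 0"
proof -
  have dm[measurable]: "d \<in> borel_measurable lborel" using int by auto
  define M where "M = density lborel (\<lambda>x. ennreal (d x))"
  define N where "N = density lborel (\<lambda>x. ennreal (- d x))"
  have eq: "emeasure M {..<a} = emeasure N {..<a}" for a
  proof -
    have ia: "integrable lborel (\<lambda>x. indicator {..<a} x * d x)"
      using integrable_real_mult_indicator[OF _ int, of "{..<a}"] by (simp add: mult.commute)
    have nb: "(\<integral>\<^sup>+x. ennreal (norm (indicator {..<a} x * d x)) \<partial>lborel) < \<infinity>"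
      using ia unfolding integrable_iff_bounded by blast
    have "0 = enn2real (\<integral>\<^sup>+x. ennreal (indicator {..<a} x * d x) \<partial>lborel)
           - enn2real (\<integral>\<^sup>+x. ennreal (- (indicator {..<a} x * d x)) \<partial>lborel)"
      using real_lebesgue_integral_def[OF ia] z[of a] by simp
    moreover have f1: "(\<integral>\<^sup>+x. ennreal (indicator {..<a} x * d x) \<partial>lborel) < \<infinity>"
      by (rule le_less_trans[OF nn_integral_mono nb]) (rule ennreal_leI, simp)
    moreover have f2: "(\<integral>\<^sup>+x. ennreal (- (indicator {..<a} x * d x)) \<partial>lborel) < \<infinity>"
      by (rule le_less_trans[OF nn_integral_mono nb]) (rule ennreal_leI, simp)
    ultimately have "(\<integral>\<^sup>+x. ennreal (indicator {..<a} x * d x) \<partial>lborel) =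
        (\<integral>\<^sup>+x. ennreal (- (indicator {..<a} x * d x)) \<partial>lborel)"
      by (rule ennreal_eq_aux)
    moreover have "emeasure M {..<a} = (\<integral>\<^sup>+x. ennreal (indicator {..<a} x * d x) \<partial>lborel)"
      unfolding M_def by (subst emeasure_density) (auto intro!: nn_integral_cong split: split_indicator)
    moreover have "emeasure N {..<a} = (\<integral>\<^sup>+x. ennreal (- (indicator {..<a} x * d x)) \<partial>lborel)"
      unfolding N_def by (subst emeasure_density) (auto intro!: nn_integral_cong split: split_indicator)
    ultimately show ?thesis by simp
  qed
  have fin: "emeasure M {..<a} \<noteq> \<infinity>" for a
  proof -
    have "emeasure M {..<a} \<le> (\<integral>\<^sup>+x. ennreal (norm (d x)) \<partial>lborel)"
      unfolding M_def by (subst emeasure_density) (auto intro!: nn_integral_mono ennreal_leI split: split_indicator)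
    also have "\<dots> < \<infinity>" using int unfolding integrable_iff_bounded by auto
    finally show ?thesis by simp
  qed
  have finN: "emeasure N {..<a} \<noteq> top" for a using fin[of a] eq[of a] by simp
  have "M = N"
  proof (rule measure_eqI_generator_eq_countable[where E="range lessThan" and \<Omega>=UNIV and A="lessThan ` \<rat>"])
    show "Int_stable (range lessThan :: real set set)"
      unfolding Int_stable_def
    proof clarsimp
      fix a b :: real
      have "{..<a} \<inter> {..<b} = {..<min a b}" by auto
      then show "{..<a} \<inter> {..<b} \<in> range lessThan" by blast
    qed
    show "sets M = sigma_sets UNIV (range lessThan)" "sets N = sigma_sets UNIV (range lessThan)"
      unfolding N_def M_def by (simp_all add: borel_Iio)
    show "\<Union> (lessThan ` \<rat>) = (UNIV :: real set)"
    proof -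
      have "\<exists>q\<in>\<rat>. x < q" for x :: real using Rats_dense_in_real[of x "x+1"] by auto
      then show ?thesis by auto
    qed
  qed (auto simp: eq finN countable_rat)
  then have "AE x in lborel. ennreal (d x) = ennreal (- d x)"
    unfolding M_def N_def by (intro sigma_finite_measure.density_unique[OF sigma_finite_lborel]) auto
  then show ?thesis
    by eventually_elim (metis ennreal_eq_0_iff ennreal_neg linorder_not_le neg_0_less_iff_less order.strict_iff_order)
qed

lemma abs_prod_le: "\<bar>(x::real) * y\<bar> \<le> x^2 + y^2"
proof -
  have "0 \<le> (\<bar>x\<bar> - \<bar>y\<bar>)^2" by simp
  then have "2 * (\<bar>x\<bar> * \<bar>y\<bar>) \<le> x^2 + y^2"
    by (simp add: power2_eq_square algebra_simps)
  moreover have "0 \<le> \<bar>x\<bar> * \<bar>y\<bar>" by simp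
  moreover have "\<bar>x * y\<bar> = \<bar>x\<bar> * \<bar>y\<bar>" by (rule abs_mult)
  ultimately show ?thesis by linarith
qed

lemma prod_int:
  fixes a b w :: "real \<Rightarrow> real" and A :: "real set"
  assumes [measurable]: "a \<in> borel_measurable lborel" "b \<in> borel_measurable lborel"
    "w \<in> borel_measurable lborel" "A \<in> sets lborel"
    and ia: "set_integrable lborel A (\<lambda>x. (a x)^2)"
    and ib: "set_integrable lborel A (\<lambda>x. (b x)^2)"
    and wb: "AE x in lborel. x \<in> A \<longrightarrow> \<bar>w x\<bar> \<le> C"
  shows "set_integrable lborel A (\<lambda>x. w x * a x * b x)"
  unfolding set_integrable_def
proof (rule Bochner_Integration.integrable_bound)
  show "integrable lborel (\<lambda>x. indicator A x *\<^sub>R (\<bar>C\<bar> * ((a x)^2 + (b x)^2)))"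
  proof -
    have i: "integrable lborel (\<lambda>x. \<bar>C\<bar> * (indicator A x *\<^sub>R ((a x)^2 + (b x)^2)))"
      using set_integral_add(1)[OF ia ib] unfolding set_integrable_def
      by (intro integrable_mult_right)
    have e: "(\<lambda>x. \<bar>C\<bar> * (indicator A x *\<^sub>R ((a x)^2 + (b x)^2)))
        = (\<lambda>x. indicator A x *\<^sub>R (\<bar>C\<bar> * ((a x)^2 + (b x)^2)))"
      by (simp add: fun_eq_iff)
    show ?thesis using i unfolding e .
  qed
  show "(\<lambda>x. indicator A x *\<^sub>R (w x * a x * b x)) \<in> borel_measurable lborel" by measurable
  show "AE x in lborel. norm (indicator A x *\<^sub>R (w x * a x * b x))
      \<le> norm (indicator A x *\<^sub>R (\<bar>C\<bar> * ((a x)^2 + (b x)^2)))"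
    using wb
  proof eventually_elim
    case (elim x)
    show ?case
    proof (cases "x \<in> A")
      case True
      then have "\<bar>w x\<bar> \<le> \<bar>C\<bar>" using elim by auto
      moreover have "\<bar>a x * b x\<bar> \<le> (a x)^2 + (b x)^2" by (rule abs_prod_le)
      ultimately have "\<bar>w x\<bar> * \<bar>a x * b x\<bar> \<le> \<bar>C\<bar> * ((a x)^2 + (b x)^2)"
        by (intro mult_mono) auto
      then show ?thesis using True by (simp add: abs_mult mult.assoc)
    qed simp
  qed
qed

lemma L1_of_L2:
  fixes a :: "real \<Rightarrow> real"
  assumes [measurable]: "a \<in> borel_measurable lborel"
    and ia: "set_integrable lborel {0<..<L} (\<lambda>x. (a x)^2)"
  shows "set_integrable lborel {0<..<L} a"
proof -
  have i1: "set_integrable lborel {0<..<L} (\<lambda>x. ((\<lambda>_. 1::real) x)^2)"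
    unfolding set_integrable_def by (cases "0 < L") (simp_all add: integrable_indicator_iff)
  have "set_integrable lborel {0<..<L} (\<lambda>x. (\<lambda>_. 1::real) x * a x * (\<lambda>_. 1::real) x)"
    by (rule prod_int[OF _ _ _ _ ia i1, where C=1]) auto
  then show ?thesis by simp
qed

lemma wd_unique:
  assumes L: "L > 0" and w1: "is_wderiv L v g1" and w2: "is_wderiv L v g2"
  shows "AE x in lborel. x \<in> {0<..<L} \<longrightarrow> g1 x = g2 x"
proof -
  have [measurable]: "g1 \<in> borel_measurable lborel" "g2 \<in> borel_measurable lborel"
    using w1 w2 unfolding is_wderiv_def by auto
  have i1: "set_integrable lborel {0<..<L} g1"
    using w1 unfolding is_wderiv_def by (intro L1_of_L2[where a=g1]) auto
  have i2: "set_integrable lborel {0<..<L} g2"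
    using w2 unfolding is_wderiv_def by (intro L1_of_L2[where a=g2]) auto
  define d where "d x = indicator {0<..<L} x * (g1 x - g2 x)" for x
  have int: "integrable lborel d"
    using set_integral_diff(1)[OF i1 i2] unfolding set_integrable_def d_def by simp
  have z: "(LINT x|lborel. indicator {..<a} x * d x) = 0" for a
  proof -
    define b where "b = max 0 (min a L)"
    have b: "0 \<le> b" "b \<le> L" using L unfolding b_def by auto
    have "(\<lambda>x. indicator {..<a} x * d x) = (\<lambda>x. indicator {0<..<b} x *\<^sub>R (g1 x - g2 x))"
      unfolding d_def b_def by (auto simp: fun_eq_iff split: split_indicator)
    then have "(LINT x|lborel. indicator {..<a} x * d x) = (LINT x:{0<..<b}|lborel. (g1 x - g2 x))"
      unfolding set_lebesgue_integral_def by simp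
    also have "\<dots> = (LINT x:{0<..<b}|lborel. g1 x) - (LINT x:{0<..<b}|lborel. g2 x)"
      using b by (intro set_integral_diff(2) set_integrable_subset[OF i1] set_integrable_subset[OF i2]) auto
    also have "(LINT x:{0<..<b}|lborel. g1 x) = v b"
      using w1 b unfolding is_wderiv_def by (simp add: interval_integral_Ioo)
    also have "(LINT x:{0<..<b}|lborel. g2 x) = v b"
      using w2 b unfolding is_wderiv_def by (simp add: interval_integral_Ioo)
    finally show ?thesis by simp
  qed
  have "AE x in lborel. d x = 0" by (rule ae_zero_if_Iio[OF int z])
  then show ?thesis
    by eventually_elim (auto simp: d_def)
qed


lemma div_fact_le: "\<bar>(y::real)\<bar> / fact n \<le> \<bar>y\<bar>"
  using divide_left_mono[of 1 "fact n" "\<bar>y\<bar>"] by simp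

lemma set_integral_sum_real:
  fixes f :: "nat \<Rightarrow> real \<Rightarrow> real"
  assumes "\<And>i. i \<in> I \<Longrightarrow> set_integrable M A (f i)"
  shows "(LINT x:A|M. (\<Sum>i\<in>I. f i x)) = (\<Sum>i\<in>I. LINT x:A|M. f i x)"
  unfolding set_lebesgue_integral_def scaleR_sum_right
  by (rule Bochner_Integration.integral_sum[where f="\<lambda>i x. indicator A x *\<^sub>R f i x"]) (use assms in \<open>auto simp: set_integrable_def\<close>)

lemma binom_aux:
  fixes p :: real
  assumes "1 \<le> n"
  shows "(\<Sum>j=1..n. p^j / fact j * ((-p)^(n-j) / fact (n-j))) = - ((-p)^n / fact n)"
proof -
  have "(\<Sum>j=0..n. p^j / fact j * ((-p)^(n-j) / fact (n-j)))
      = (\<Sum>j=0..n. real (n choose j) * p^j * (-p)^(n-j)) / fact n"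
    unfolding sum_divide_distrib
    by (intro sum.cong refl) (simp add: binomial_fact field_simps)
  also have "\<dots> = (p + - p)^n / fact n"
    by (simp only: atLeast0AtMost binomial_ring[of p "-p" n])
  also have "\<dots> = 0" using assms by simp
  finally have "(\<Sum>j=0..n. p^j / fact j * ((-p)^(n-j) / fact (n-j))) = 0" .
  moreover have "(\<Sum>j=0..n. p^j / fact j * ((-p)^(n-j) / fact (n-j)))
     = (-p)^n / fact n + (\<Sum>j=1..n. p^j / fact j * ((-p)^(n-j) / fact (n-j)))"
    by (subst sum.atLeast_Suc_atMost) auto
  ultimately show ?thesis by linarith
qed

lemma L2_comb:
  fixes a b c :: "real \<Rightarrow> real" and A :: "real set"
  assumes [measurable]: "a \<in> borel_measurable lborel" "b \<in> borel_measurable lborel"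
    "c \<in> borel_measurable lborel" "A \<in> sets lborel"
    and ia: "set_integrable lborel A (\<lambda>x. (a x)^2)"
    and ib: "set_integrable lborel A (\<lambda>x. (b x)^2)"
    and cb: "AE x in lborel. x \<in> A \<longrightarrow> \<bar>c x\<bar> \<le> D"
  shows "set_integrable lborel A (\<lambda>x. (a x - c x * b x)^2)"
  unfolding set_integrable_def
proof (rule Bochner_Integration.integrable_bound)
  show "integrable lborel (\<lambda>x. indicator A x *\<^sub>R (2 * (a x)^2 + 2 * D^2 * (b x)^2))"
  proof -
    have i: "integrable lborel (\<lambda>x. 2 * (indicator A x *\<^sub>R (a x)^2) + 2 * D^2 * (indicator A x *\<^sub>R (b x)^2))"
      using ia ib unfolding set_integrable_def
      by (intro Bochner_Integration.integrable_add integrable_mult_right)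
    have e: "(\<lambda>x. 2 * (indicator A x *\<^sub>R (a x)^2) + 2 * D^2 * (indicator A x *\<^sub>R (b x)^2))
        = (\<lambda>x. indicator A x *\<^sub>R (2 * (a x)^2 + 2 * D^2 * (b x)^2))"
      by (simp add: fun_eq_iff algebra_simps)
    show ?thesis using i unfolding e .
  qed
  show "(\<lambda>x. indicator A x *\<^sub>R (a x - c x * b x)^2) \<in> borel_measurable lborel" by measurable
  show "AE x in lborel. norm (indicator A x *\<^sub>R (a x - c x * b x)^2)
      \<le> norm (indicator A x *\<^sub>R (2 * (a x)^2 + 2 * D^2 * (b x)^2))"
    using cb
  proof eventually_elim
    case (elim x)
    show ?case
    proof (cases "x \<in> A")
      case True
      then have "\<bar>c x\<bar> \<le> D" using elim by auto
      then have "\<bar>c x\<bar>^2 \<le> D^2" by (intro power_mono) auto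
      then have "(c x)^2 * (b x)^2 \<le> D^2 * (b x)^2" by (intro mult_right_mono) auto
      moreover have "(a x - c x * b x)^2 \<le> 2 * (a x)^2 + 2 * ((c x)^2 * (b x)^2)"
      proof -
        have "0 \<le> (a x + c x * b x)^2" by simp
        then show ?thesis by (simp add: power2_eq_square algebra_simps)
      qed
      ultimately have "(a x - c x * b x)^2 \<le> 2 * (a x)^2 + 2 * D^2 * (b x)^2" by linarith
      then show ?thesis using True by simp
    qed simp
  qed
qed


theorem lemma4:
  fixes L \<kappa>min \<kappa>max \<beta> :: real
    and \<kappa> f :: "real \<Rightarrow> real"
    and u :: "nat \<Rightarrow> real \<Rightarrow> real"
    and m :: nat
  assumes L_pos: "L > 0"
    and \<kappa>_meas: "\<kappa> \<in> borel_measurable lborel"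
    and \<kappa>min_pos: "0 < \<kappa>min"
    and \<kappa>_bounds: "AE x in lborel. x \<in> {0<..<L} \<longrightarrow> \<kappa>min \<le> \<kappa> x \<and> \<kappa> x \<le> \<kappa>max"
    and f_meas: "f \<in> borel_measurable lborel"
    and f_L2: "set_integrable lborel {0<..<L} (\<lambda>x. (f x)^2)"
    and m_ge1: "m \<ge> 1"
    and u_V: "\<And>n. n \<le> m \<Longrightarrow> inV L (u n)"
    and u0_eq: "\<And>v. inV L v \<Longrightarrow>
        a_form L (\<lambda>x. ln (\<kappa> x)) 0 (u 0) v = (LINT x:{0<..<L}|lborel. f x * v x) - \<beta> * v L"
    and un_eq: "\<And>n v. 1 \<le> n \<Longrightarrow> n \<le> m \<Longrightarrow> inV L v \<Longrightarrow>
        a_form L (\<lambda>x. ln (\<kappa> x)) 0 (u n) v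
          + (\<Sum>j=1..n. a_form L (\<lambda>x. ln (\<kappa> x)) j (u (n - j)) v) = 0"
  shows "\<forall>v. inV L v \<longrightarrow>
    a_form L (\<lambda>x. ln (\<kappa> x)) 0 (u m) v = (-1)^m * a_form L (\<lambda>x. ln (\<kappa> x)) m (u 0) v"
proof -
  define A where "A = {0<..<L::real}"
  have A_sets[measurable, simp]: "A \<in> sets lborel" unfolding A_def by simp
  have A_borel[measurable, simp]: "A \<in> sets borel" unfolding A_def by simp
  have km[measurable]: "\<kappa> \<in> borel_measurable lborel" by (rule \<kappa>_meas)
  define C where "C = \<bar>ln \<kappa>min\<bar> + \<bar>ln \<kappa>max\<bar>"
  have C_nn: "0 \<le> C" unfolding C_def by simp
  have psi_bd: "AE x in lborel. x \<in> A \<longrightarrow> \<bar>ln (\<kappa> x)\<bar> \<le> C"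
    using \<kappa>_bounds unfolding A_def
  proof eventually_elim
    case (elim x)
    show ?case
    proof
      assume "x \<in> {0<..<L}"
      then have k: "\<kappa>min \<le> \<kappa> x" "\<kappa> x \<le> \<kappa>max" using elim by auto
      then have kp: "0 < \<kappa> x" using \<kappa>min_pos by linarith
      have l1: "ln \<kappa>min \<le> ln (\<kappa> x)" using k kp \<kappa>min_pos by simp
      have l2: "ln (\<kappa> x) \<le> ln \<kappa>max" using k kp by simp
      show "\<bar>ln (\<kappa> x)\<bar> \<le> C" unfolding C_def
        using l1 l2 abs_ge_self[of "ln \<kappa>max"] abs_ge_minus_self[of "ln \<kappa>min"]
          abs_ge_self[of "ln \<kappa>min"] abs_ge_minus_self[of "ln \<kappa>max"]
        by (simp add: abs_le_iff)
    qed
  qed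
  have pow_bd: "AE x in lborel. x \<in> A \<longrightarrow> \<bar>ln (\<kappa> x)^j\<bar> \<le> C^j" for j
    using psi_bd by eventually_elim (auto simp: power_abs intro: power_mono)
  define cc where "cc n x = (- ln (\<kappa> x))^n / fact n" for n x
  have cc_meas[measurable]: "cc n \<in> borel_measurable lborel" for n
    unfolding cc_def by measurable
  have cc_bd: "AE x in lborel. x \<in> A \<longrightarrow> \<bar>cc n x\<bar> \<le> C^n" for n
    using pow_bd[of n]
  proof eventually_elim
    case (elim x)
    show ?case
    proof
      assume "x \<in> A"
      then have "\<bar>ln (\<kappa> x)^n\<bar> \<le> C^n" using elim by auto
      then have "\<bar>ln (\<kappa> x)^n\<bar> / fact n \<le> C^n"
        using div_fact_le[of "ln (\<kappa> x)^n" n] by linarith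
      then show "\<bar>cc n x\<bar> \<le> C^n" unfolding cc_def
        by (simp add: power_abs)
    qed
  qed
  define G where "G k = wderiv L (u k)" for k
  have Gw: "is_wderiv L (u k) (G k)" if "k \<le> m" for k
    using u_V[OF that] unfolding inV_def G_def wderiv_def by (rule someI_ex)
  have Gm: "G k \<in> borel_measurable lborel" if "k \<le> m" for k
    using Gw[OF that] unfolding is_wderiv_def by auto
  have GL2: "set_integrable lborel A (\<lambda>x. (G k x)^2)" if "k \<le> m" for k
    using Gw[OF that] unfolding is_wderiv_def A_def by auto
  have Vw: "is_wderiv L v (wderiv L v)" if "inV L v" for v
    using that unfolding inV_def wderiv_def by (rule someI_ex)
  have G0m[measurable]: "G 0 \<in> borel_measurable lborel" by (rule Gm) simp
  have G0L2: "set_integrable lborel A (\<lambda>x. (G 0 x)^2)" by (rule GL2) simp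
  have a_eq: "a_form L (\<lambda>x. ln (\<kappa> x)) j w v
      = (1 / fact j) * (LINT x:A|lborel. ln (\<kappa> x)^j * wderiv L w x * wderiv L v x)" for j w v
    unfolding a_form_def A_def by simp

  have key: "(LINT x:A|lborel. G n x * wderiv L v x) = (LINT x:A|lborel. cc n x * G 0 x * wderiv L v x)"
    if n1: "1 \<le> n" and nm: "n \<le> m" and IH: "\<And>k. k < n \<Longrightarrow> AE x in lborel. x \<in> A \<longrightarrow> G k x = cc k x * G 0 x"
      and v: "inV L v" for n v
  proof -
    define Gv where "Gv = wderiv L v"
    have Gvm[measurable]: "Gv \<in> borel_measurable lborel"
      using Vw[OF v] unfolding Gv_def is_wderiv_def by auto
    have GvL2: "set_integrable lborel A (\<lambda>x. (Gv x)^2)"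
      using Vw[OF v] unfolding Gv_def is_wderiv_def A_def by auto
    define w where "w j x = ln (\<kappa> x)^j / fact j * cc (n - j) x" for j x
    have wm[measurable]: "w j \<in> borel_measurable lborel" for j
      unfolding w_def by measurable
    have w_bd: "AE x in lborel. x \<in> A \<longrightarrow> \<bar>w j x\<bar> \<le> C^j * C^(n-j)" for j
      using pow_bd[of j] cc_bd[of "n - j"]
    proof eventually_elim
      case (elim x)
      show ?case
      proof
        assume xA: "x \<in> A"
        have "\<bar>ln (\<kappa> x)^j / fact j\<bar> \<le> \<bar>ln (\<kappa> x)^j\<bar>"
          using div_fact_le[of "ln (\<kappa> x)^j" j] by (simp add: abs_divide)
        also have "\<dots> \<le> C^j" using elim xA by auto
        finally have "\<bar>ln (\<kappa> x)^j / fact j\<bar> \<le> C^j" .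
        moreover have "\<bar>cc (n - j) x\<bar> \<le> C^(n-j)" using elim xA by auto
        ultimately show "\<bar>w j x\<bar> \<le> C^j * C^(n-j)" unfolding w_def abs_mult
          by (intro mult_mono) (auto simp: C_nn)
      qed
    qed
    have wint: "set_integrable lborel A (\<lambda>x. w j x * G 0 x * Gv x)" for j
      by (rule prod_int[OF G0m Gvm wm A_sets G0L2 GvL2 w_bd])
    have termj: "a_form L (\<lambda>x. ln (\<kappa> x)) j (u (n - j)) v = (LINT x:A|lborel. w j x * G 0 x * Gv x)"
      if j: "j \<in> {1..n}" for j
    proof -
      have "n - j < n" using j n1 by auto
      note ih = IH[OF this]
      have Gnj[measurable]: "G (n - j) \<in> borel_measurable lborel" using nm by (intro Gm) simp
      have "a_form L (\<lambda>x. ln (\<kappa> x)) j (u (n - j)) v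
          = (1 / fact j) * (LINT x:A|lborel. ln (\<kappa> x)^j * G (n - j) x * Gv x)"
        unfolding a_eq G_def Gv_def ..
      also have "(LINT x:A|lborel. ln (\<kappa> x)^j * G (n - j) x * Gv x)
          = (LINT x:A|lborel. ln (\<kappa> x)^j * (cc (n - j) x * G 0 x) * Gv x)"
      proof (rule set_lebesgue_integral_cong_AE)
        show "(\<lambda>x. ln (\<kappa> x)^j * G (n - j) x * Gv x) \<in> borel_measurable lborel"
          by measurable
        show "(\<lambda>x. ln (\<kappa> x)^j * (cc (n - j) x * G 0 x) * Gv x) \<in> borel_measurable lborel"
          by measurable
        show "AE x\<in>A in lborel. ln (\<kappa> x)^j * G (n - j) x * Gv x = ln (\<kappa> x)^j * (cc (n - j) x * G 0 x) * Gv x"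
          using ih by eventually_elim auto
      qed simp
      also have "(1 / fact j) * \<dots> = (LINT x:A|lborel. (1 / fact j) * (ln (\<kappa> x)^j * (cc (n - j) x * G 0 x) * Gv x))"
        by simp
      also have "\<dots> = (LINT x:A|lborel. w j x * G 0 x * Gv x)"
        unfolding w_def by (intro set_lebesgue_integral_cong) auto
      finally show ?thesis .
    qed
    have "(\<Sum>j=1..n. a_form L (\<lambda>x. ln (\<kappa> x)) j (u (n - j)) v)
        = (\<Sum>j=1..n. LINT x:A|lborel. w j x * G 0 x * Gv x)"
      using termj by (rule sum.cong[OF refl])
    also have "\<dots> = (LINT x:A|lborel. (\<Sum>j=1..n. w j x * G 0 x * Gv x))"
      by (rule set_integral_sum_real[symmetric]) (rule wint)
    also have "\<dots> = (LINT x:A|lborel. - (cc n x * G 0 x * Gv x))"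
    proof (intro set_lebesgue_integral_cong allI impI A_sets)
      fix x
      have "(\<Sum>j=1..n. w j x * G 0 x * Gv x) = (\<Sum>j=1..n. w j x) * G 0 x * Gv x"
        by (simp add: sum_distrib_right)
      also have "(\<Sum>j=1..n. w j x) = - cc n x"
        unfolding w_def cc_def using binom_aux[OF n1, of "ln (\<kappa> x)"] by simp
      finally show "(\<Sum>j=1..n. w j x * G 0 x * Gv x) = - (cc n x * G 0 x * Gv x)" by simp
    qed
    also have "\<dots> = - (LINT x:A|lborel. cc n x * G 0 x * Gv x)"
      by (rule set_integral_uminus) (rule prod_int[OF G0m Gvm cc_meas A_sets G0L2 GvL2 cc_bd])
    finally have s: "(\<Sum>j=1..n. a_form L (\<lambda>x. ln (\<kappa> x)) j (u (n - j)) v)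
        = - (LINT x:A|lborel. cc n x * G 0 x * Gv x)" .
    have "a_form L (\<lambda>x. ln (\<kappa> x)) 0 (u n) v = (LINT x:A|lborel. G n x * Gv x)"
      unfolding a_eq G_def Gv_def by simp
    then show ?thesis using un_eq[OF n1 nm v] s unfolding Gv_def by simp
  qed
  have P: "AE x in lborel. x \<in> A \<longrightarrow> G n x = cc n x * G 0 x" if "n \<le> m" for n
    using that
  proof (induction n rule: less_induct)
    case (less n)
    show ?case
    proof (cases "n = 0")
      case True
      then show ?thesis by (simp add: cc_def)
    next
      case False
      then have n1: "1 \<le> n" by simp
      have IH: "AE x in lborel. x \<in> A \<longrightarrow> G k x = cc k x * G 0 x" if "k < n" for k
        using less.IH[OF that] that less.prems by simp
      have Gnm[measurable]: "G n \<in> borel_measurable lborel" using Gm less.prems by simp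
      define h where "h x = G n x - cc n x * G 0 x" for x
      have hm[measurable]: "h \<in> borel_measurable lborel" unfolding h_def by measurable
      have hL2: "set_integrable lborel A (\<lambda>x. (h x)^2)"
        unfolding h_def by (rule L2_comb[OF Gnm G0m cc_meas A_sets GL2[OF less.prems] G0L2 cc_bd])
      define vh where "vh x = (LBINT t=0..x. h t)" for x
      have wh: "is_wderiv L vh h"
        unfolding is_wderiv_def vh_def using hL2 unfolding A_def by auto
      then have vV: "inV L vh" unfolding inV_def by blast
      define Gh where "Gh = wderiv L vh"
      have wGh: "is_wderiv L vh Gh" unfolding Gh_def by (rule Vw[OF vV])
      have Ghm[measurable]: "Gh \<in> borel_measurable lborel" using wGh unfolding is_wderiv_def by auto
      have GhL2: "set_integrable lborel A (\<lambda>x. (Gh x)^2)" using wGh unfolding is_wderiv_def A_def by auto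
      have ae: "AE x in lborel. x \<in> A \<longrightarrow> Gh x = h x"
        using wd_unique[OF L_pos wGh wh] unfolding A_def .
      have k: "(LINT x:A|lborel. G n x * Gh x) = (LINT x:A|lborel. cc n x * G 0 x * Gh x)"
        using key[OF n1 less.prems IH vV] unfolding Gh_def .
      have i1: "set_integrable lborel A (\<lambda>x. G n x * Gh x)"
        using prod_int[OF Gnm Ghm _ A_sets GL2[OF less.prems] GhL2, of "\<lambda>_. 1" 1] by simp
      have i2: "set_integrable lborel A (\<lambda>x. cc n x * G 0 x * Gh x)"
        by (rule prod_int[OF G0m Ghm cc_meas A_sets G0L2 GhL2 cc_bd])
      have "(LINT x:A|lborel. h x * Gh x) = (LINT x:A|lborel. G n x * Gh x - cc n x * G 0 x * Gh x)"
        unfolding h_def by (simp add: algebra_simps)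
      also have "\<dots> = 0" using set_integral_diff(2)[OF i1 i2] k by simp
      finally have z: "(LINT x:A|lborel. h x * Gh x) = 0" .
      have "(LINT x:A|lborel. (h x)^2) = (LINT x:A|lborel. h x * Gh x)"
      proof (rule set_lebesgue_integral_cong_AE)
        show "AE x\<in>A in lborel. (h x)^2 = h x * Gh x"
          using ae by eventually_elim (auto simp: power2_eq_square)
      qed simp_all
      then have z2: "integral\<^sup>L lborel (\<lambda>x. indicator A x *\<^sub>R (h x)^2) = 0"
        using z unfolding set_lebesgue_integral_def by simp
      have "AE x in lborel. indicator A x *\<^sub>R (h x)^2 = (0::real)"
        using integral_nonneg_eq_0_iff_AE[of lborel "\<lambda>x. indicator A x *\<^sub>R (h x)^2"] z2 hL2
        unfolding set_integrable_def by simp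
      then show ?thesis
        by eventually_elim (auto simp: h_def split: split_indicator)
    qed
  qed
  show ?thesis
  proof (intro allI impI)
    fix v assume v: "inV L v"
    define Gv where "Gv = wderiv L v"
    have Gvm[measurable]: "Gv \<in> borel_measurable lborel"
      using Vw[OF v] unfolding Gv_def is_wderiv_def by auto
    have Gmm[measurable]: "G m \<in> borel_measurable lborel" by (rule Gm) simp
    have "a_form L (\<lambda>x. ln (\<kappa> x)) 0 (u m) v = (LINT x:A|lborel. G m x * Gv x)"
      unfolding a_eq G_def Gv_def by simp
    also have "\<dots> = (LINT x:A|lborel. cc m x * G 0 x * Gv x)"
    proof (rule set_lebesgue_integral_cong_AE)
      show "AE x\<in>A in lborel. G m x * Gv x = cc m x * G 0 x * Gv x"
        using P[OF order_refl] by eventually_elim auto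
    qed simp_all
    also have "\<dots> = (LINT x:A|lborel. ((-1)^m / fact m) * (ln (\<kappa> x)^m * G 0 x * Gv x))"
      unfolding cc_def by (intro set_lebesgue_integral_cong allI impI A_sets)
        (simp add: power_minus[of "ln (\<kappa> _)"])
    also have "\<dots> = (-1)^m * a_form L (\<lambda>x. ln (\<kappa> x)) m (u 0) v"
      unfolding a_eq G_def Gv_def by simp
    finally show "a_form L (\<lambda>x. ln (\<kappa> x)) 0 (u m) v = (-1)^m * a_form L (\<lambda>x. ln (\<kappa> x)) m (u 0) v" .
  qed
qed

end
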